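(* Let $X$ be a $T_1$ topological space. The following are equivalent: (i) $C_c(X)_F=C_c(X)$; (ii) $X$ is discrete; (iii) $C_c(X)_F$ is a quotient ring of $C_c(X)$, i.e. for every nonzero $s\in C_c(X)_F$ there exists $r\in C_c(X)$ with $0\neq sr\in C_c(X)$.
   Context: $C_c(X)_F$ denotes the set of all functions $f:X\to\mathbb{R}$ whose range is countable and whose set of points of discontinuity is finite; $C_c(X)$ denotes the ring of continuous functions $X\to\mathbb{R}$ with countable range, a subring of $C_c(X)_F$. *)

theory Defs
  imports "HOL-Analysis.Analysis"
begin

definition CcF :: "('a::topological_space \<Rightarrow> real) set" where
  "CcF = {f. countable (range f) \<and> finite {x. \<not> (f \<longlongrightarrow> f x) (at x)}}"

definition Cc :: "('a::topological_space \<Rightarrow> real) set" where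
  "Cc = {f. continuous_on UNIV f \<and> countable (range f)}"

definition discrete_space :: "'a::topological_space itself \<Rightarrow> bool" where
  "discrete_space _ \<longleftrightarrow> (\<forall>S::'a set. open S)"

end

theory Submission
  imports Defs
begin

lemma disc_iff: "discrete_space TYPE('a::topological_space) \<longleftrightarrow> (\<forall>x::'a. open {x})"
proof
  assume "discrete_space TYPE('a)" thus "\<forall>x::'a. open {x}" by (simp add: discrete_space_def)
next
  assume h: "\<forall>x::'a. open {x}"
  have "open (S::'a set)" for S
  proof -
    have "S = (\<Union>x\<in>S. {x})" by auto
    thus ?thesis using h by (metis open_UN)
  qed
  thus "discrete_space TYPE('a)" by (simp add: discrete_space_def)
qed

lemma disc_tendsto:
  assumes "discrete_space TYPE('a::topological_space)"
  shows "((f::'a \<Rightarrow> real) \<longlongrightarrow> f x) (at x)"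
proof -
  have "at x = bot" using assms by (simp add: disc_iff at_eq_bot_iff)
  thus ?thesis by simp
qed

lemma disc_cont:
  assumes "discrete_space TYPE('a::topological_space)"
  shows "continuous_on UNIV (f::'a \<Rightarrow> real)"
  using disc_tendsto[OF assms] by (simp add: continuous_on_def)

lemma ind_CcF:
  fixes x :: "'a::t1_space"
  shows "(\<lambda>y. if y = x then 1 else 0 :: real) \<in> CcF"
proof -
  let ?s = "\<lambda>y. if y = x then 1 else 0 :: real"
  have "range ?s \<subseteq> {0,1}" by auto
  hence c: "countable (range ?s)" by (meson countable_finite countable_subset finite.emptyI finite_insert)
  have "{y. \<not> (?s \<longlongrightarrow> ?s y) (at y)} \<subseteq> {x}"
  proof
    fix y assume y: "y \<in> {y. \<not> (?s \<longlongrightarrow> ?s y) (at y)}"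
    show "y \<in> {x}"
    proof (rule ccontr)
      assume "y \<notin> {x}"
      hence yx: "y \<noteq> x" by simp
      have "open (UNIV - {x})" by (simp add: open_Diff)
      hence "eventually (\<lambda>z. z \<in> UNIV - {x}) (at y)"
        using yx by (intro eventually_at_in_open') auto
      hence "eventually (\<lambda>z. ?s z = ?s y) (at y)"
        by eventually_elim (use yx in auto)
      hence "(?s \<longlongrightarrow> ?s y) (at y)" by (rule tendsto_eventually)
      thus False using y by simp
    qed
  qed
  hence "finite {y. \<not> (?s \<longlongrightarrow> ?s y) (at y)}" using finite_subset by blast
  thus ?thesis using c by (simp add: CcF_def)
qed

lemma ind_not_cont:
  fixes x :: "'a::t1_space"
  assumes "\<not> open {x}" "c \<noteq> 0"
  shows "\<not> ((\<lambda>y. (if y = x then 1 else 0 :: real) * c) \<longlongrightarrow> (if x = x then 1 else 0) * c) (at x)"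
proof
  let ?g = "\<lambda>y. (if y = x then 1 else 0 :: real) * c"
  assume h: "(?g \<longlongrightarrow> (if x = x then 1 else 0) * c) (at x)"
  have nb: "at x \<noteq> bot" using assms(1) by (simp add: at_eq_bot_iff)
  have "eventually (\<lambda>y. ?g y = 0) (at x)"
    by (simp add: eventually_at_filter)
  hence "(?g \<longlongrightarrow> 0) (at x)" by (rule tendsto_eventually)
  from tendsto_unique[OF nb h this] show False using assms(2) by simp
qed

theorem theorem5p1:
  shows "((CcF :: ('a::t1_space \<Rightarrow> real) set) = Cc \<longleftrightarrow> discrete_space TYPE('a))
    \<and> (discrete_space TYPE('a) \<longleftrightarrow>
        (\<forall>s \<in> (CcF :: ('a \<Rightarrow> real) set). s \<noteq> (\<lambda>_. 0) \<longrightarrow>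
           (\<exists>r \<in> Cc. (\<lambda>x. s x * r x) \<noteq> (\<lambda>_. 0) \<and> (\<lambda>x. s x * r x) \<in> Cc)))"
proof -
  have D1: "(CcF :: ('a \<Rightarrow> real) set) = Cc" if d: "discrete_space TYPE('a)"
    using disc_tendsto[OF d] disc_cont[OF d] by (auto simp: CcF_def Cc_def)
  have D2: "\<forall>s \<in> (CcF :: ('a \<Rightarrow> real) set). s \<noteq> (\<lambda>_. 0) \<longrightarrow>
           (\<exists>r \<in> Cc. (\<lambda>x. s x * r x) \<noteq> (\<lambda>_. 0) \<and> (\<lambda>x. s x * r x) \<in> Cc)"
    if d: "discrete_space TYPE('a)"
  proof (intro ballI impI)
    fix s :: "'a \<Rightarrow> real" assume s: "s \<in> CcF" "s \<noteq> (\<lambda>_. 0)"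
    have "(\<lambda>_. 1::real) \<in> Cc" by (simp add: Cc_def)
    moreover have "(\<lambda>x. s x * 1) \<in> Cc" using s D1[OF d] by simp
    ultimately show "\<exists>r \<in> Cc. (\<lambda>x. s x * r x) \<noteq> (\<lambda>_. 0) \<and> (\<lambda>x. s x * r x) \<in> Cc"
      using s by (intro bexI[of _ "\<lambda>_. 1"]) auto
  qed
  have N: "\<exists>x::'a. \<not> open {x}" if "\<not> discrete_space TYPE('a)"
    using that disc_iff by blast
  have N1: "(CcF :: ('a \<Rightarrow> real) set) \<noteq> Cc" if nd: "\<not> discrete_space TYPE('a)"
  proof
    assume eq: "(CcF :: ('a \<Rightarrow> real) set) = Cc"
    obtain x :: 'a where x: "\<not> open {x}" using N[OF nd] by blast
    let ?s = "\<lambda>y. if y = x then 1 else 0 :: real"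
    have "?s \<in> Cc" using ind_CcF[of x] eq by simp
    hence "continuous_on UNIV ?s" by (simp add: Cc_def)
    hence "(?s \<longlongrightarrow> ?s x) (at x)" unfolding continuous_on_def by blast
    thus False using ind_not_cont[OF x, of 1] by simp
  qed
  have N2: "\<not> (\<forall>s \<in> (CcF :: ('a \<Rightarrow> real) set). s \<noteq> (\<lambda>_. 0) \<longrightarrow>
           (\<exists>r \<in> Cc. (\<lambda>x. s x * r x) \<noteq> (\<lambda>_. 0) \<and> (\<lambda>x. s x * r x) \<in> Cc))"
    if nd: "\<not> discrete_space TYPE('a)"
  proof
    assume H: "\<forall>s \<in> (CcF :: ('a \<Rightarrow> real) set). s \<noteq> (\<lambda>_. 0) \<longrightarrow>
           (\<exists>r \<in> Cc. (\<lambda>x. s x * r x) \<noteq> (\<lambda>_. 0) \<and> (\<lambda>x. s x * r x) \<in> Cc)"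
    obtain x :: 'a where x: "\<not> open {x}" using N[OF nd] by blast
    let ?s = "\<lambda>y. if y = x then 1 else 0 :: real"
    have "?s \<noteq> (\<lambda>_. 0)" by (metis one_neq_zero)
    then obtain r where r: "(\<lambda>y. ?s y * r y) \<noteq> (\<lambda>_. 0)" "(\<lambda>y. ?s y * r y) \<in> Cc"
      using H ind_CcF[of x] by blast
    have rx: "r x \<noteq> 0"
    proof
      assume "r x = 0"
      hence "(\<lambda>y. ?s y * r y) = (\<lambda>_. 0)" by auto
      thus False using r(1) by simp
    qed
    have eqf: "(\<lambda>y. ?s y * r y) = (\<lambda>y. ?s y * r x)" by auto
    have "continuous_on UNIV (\<lambda>y. ?s y * r x)" using r(2) eqf by (simp add: Cc_def)
    hence "((\<lambda>y. ?s y * r x) \<longlongrightarrow> ?s x * r x) (at x)" unfolding continuous_on_def by blast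
    thus False using ind_not_cont[OF x rx] by simp
  qed
  show ?thesis using D1 D2 N1 N2 by blast
qed

end
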